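(* Let $j\ge 1$ and consider the $j$-th flow of the type II hierarchy (defined in the context), i.e. the system $q_{t_j}=F_j[q,r]$, $r_{t_j}=G_j[q,r]$. Then this system admits the constraint $r=-\bar q$: for every smooth $q:\mathbb{R}^2\to\mathbb{C}$ one has the identity $$G_j[q,-\bar q]=-\overline{F_j[q,-\bar q]},$$ so that the constraint $r=-\bar q$ is preserved by the flow and the system reduces to a single evolution equation $q_{t_j}=F_j[q,-\bar q]$ for $q$ (for $j=2$ this is the Gerdjikov–Ivanov equation $q_t=\frac{i}{2}q_{xx}+\frac12 q^2\bar q_x+\frac{i}{4}|q|^4q$).
   Context: Let $a=\mathrm{diag}(i,-i)$. For smooth complex-valued functions $q(x,t)$, $r(x,t)$ set $u=\begin{pmatrix}0&q\\ r&0\end{pmatrix}$ and $P_0=\frac{i}{2}\begin{pmatrix}qr&0\\0&-qr\end{pmatrix}$. Consider formal series $Q=\sum_{k\le 2}Q_k\lambda^k$ in a formal parameter $\lambda$, whose coefficients $Q_k$ are traceless $2\times2$ matrices of smooth functions of $(x,t)$, with $Q_k$ diagonal for $k$ even and off-diagonal for $k$ odd. Let $Q$ be the unique such series with $Q_2=a$, $Q_1=u$, satisfying $[\partial_x+a\lambda^2+u\lambda+P_0,\;Q]=0$ (i.e. $\partial_x Q+[a\lambda^2+u\lambda+P_0,Q]=0$ coefficientwise) and $Q^2=-\lambda^4 I$; its coefficients are differential polynomials in $q,r$. The $j$-th flow of the "type II hierarchy" is $$u_{t_j}=\partial_x Q_{3-2j}+[P_0,Q_{3-2j}]+[u,Q_{2-2j}],$$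 whose right-hand side is off-diagonal, of the form $\begin{pmatrix}0&F_j[q,r]\\ G_j[q,r]&0\end{pmatrix}$ with $F_j,G_j$ differential polynomials in $q,r$; thus the flow is the system $q_{t_j}=F_j[q,r]$, $r_{t_j}=G_j[q,r]$. *)

theory Defs
  imports "HOL-Analysis.Analysis"
begin

type_synonym mat2 = "complex^2^2"

definition mk2 :: "complex \<Rightarrow> complex \<Rightarrow> complex \<Rightarrow> complex \<Rightarrow> mat2" where
  "mk2 a b c d = (\<chi> i j. if i = 1 then (if j = 1 then a else b) else (if j = 1 then c else d))"

definition comm :: "mat2 \<Rightarrow> mat2 \<Rightarrow> mat2" where
  "comm A B = A ** B - B ** A"

text \<open>Smoothness (C-infinity) of a complex function on R^2: it lies in a class of
  functions closed under taking both partial derivatives, each member being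
  (Frechet) differentiable with those partials.\<close>
definition smooth2 :: "(real \<times> real \<Rightarrow> complex) \<Rightarrow> bool" where
  "smooth2 f \<longleftrightarrow> (\<exists>S. f \<in> S \<and> (\<forall>g\<in>S. \<exists>gx\<in>S. \<exists>gt\<in>S. \<forall>z.
      (g has_derivative (\<lambda>(h,k). h *\<^sub>R gx z + k *\<^sub>R gt z)) (at z)))"

definition amat :: mat2 where "amat = mk2 \<i> 0 0 (-\<i>)"

definition umat :: "(real \<times> real \<Rightarrow> complex) \<Rightarrow> (real \<times> real \<Rightarrow> complex) \<Rightarrow> real \<times> real \<Rightarrow> mat2" where
  "umat q r z = mk2 0 (q z) (r z) 0"

definition P0mat :: "(real \<times> real \<Rightarrow> complex) \<Rightarrow> (real \<times> real \<Rightarrow> complex) \<Rightarrow> real \<times> real \<Rightarrow> mat2" where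
  "P0mat q r z = mk2 (\<i>/2 * q z * r z) 0 0 (- (\<i>/2 * q z * r z))"

definition dx :: "(real \<times> real \<Rightarrow> mat2) \<Rightarrow> real \<times> real \<Rightarrow> mat2" where
  "dx f z = vector_derivative (\<lambda>s. f (s, snd z)) (at (fst z))"

text \<open>Q k is the coefficient of lambda^k of the formal series Q = sum_(k<=2) Q_k lambda^k
  (so Q k = 0 for k > 2).  The conditions below are: traceless, parity (diagonal for even k,
  off-diagonal for odd k), Q_2 = a, Q_1 = u, the commutator equation
  d_x Q + [a lambda^2 + u lambda + P0, Q] = 0 coefficientwise (coefficient of lambda^k), and
  Q^2 = - lambda^4 I coefficientwise.\<close>
definition typeII_series ::
  "(real \<times> real \<Rightarrow> complex) \<Rightarrow> (real \<times> real \<Rightarrow> complex) \<Rightarrow> (int \<Rightarrow> real \<times> real \<Rightarrow> mat2) \<Rightarrow> bool" where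
  "typeII_series q r Q \<longleftrightarrow>
     (\<forall>k z. k > 2 \<longrightarrow> Q k z = 0) \<and>
     (\<forall>k z. Q k z $ 1 $ 1 + Q k z $ 2 $ 2 = 0) \<and>
     (\<forall>k z. even k \<longrightarrow> Q k z $ 1 $ 2 = 0 \<and> Q k z $ 2 $ 1 = 0) \<and>
     (\<forall>k z. odd k \<longrightarrow> Q k z $ 1 $ 1 = 0 \<and> Q k z $ 2 $ 2 = 0) \<and>
     (\<forall>z. Q 2 z = amat) \<and> (\<forall>z. Q 1 z = umat q r z) \<and>
     (\<forall>k x t. ((\<lambda>s. Q k (s, t)) has_vector_derivative
         - (comm amat (Q (k - 2) (x, t)) + comm (umat q r (x, t)) (Q (k - 1) (x, t))
            + comm (P0mat q r (x, t)) (Q k (x, t)))) (at x)) \<and>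
     (\<forall>k z. (\<Sum>i\<in>{k - 2..2}. Q i z ** Q (k - i) z) = (if k = 4 then - mat 1 else 0))"

definition flowRHS ::
  "(real \<times> real \<Rightarrow> complex) \<Rightarrow> (real \<times> real \<Rightarrow> complex) \<Rightarrow> (int \<Rightarrow> real \<times> real \<Rightarrow> mat2) \<Rightarrow> nat \<Rightarrow> real \<times> real \<Rightarrow> mat2" where
  "flowRHS q r Q j z = dx (Q (3 - 2 * int j)) z + comm (P0mat q r z) (Q (3 - 2 * int j) z)
      + comm (umat q r z) (Q (2 - 2 * int j) z)"

definition flowF where "flowF q r Q j z = flowRHS q r Q j z $ 1 $ 2"
definition flowG where "flowG q r Q j z = flowRHS q r Q j z $ 2 $ 1"

end

theory Submission
  imports Defs
begin

lemma mk2_simps[simp]: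
  "mk2 a b c d $ 1 $ 1 = a" "mk2 a b c d $ 1 $ 2 = b"
  "mk2 a b c d $ 2 $ 1 = c" "mk2 a b c d $ 2 $ 2 = d"
  by (simp_all add: mk2_def)

lemma mult2_entry[simp]: "((A::mat2) ** B) $ i $ j = A$i$1 * B$1$j + A$i$2 * B$2$j"
  by (simp add: matrix_matrix_mult_def sum_2)

lemma mat2_eq_iff: "(A::mat2) = B \<longleftrightarrow>
   A$1$1 = B$1$1 \<and> A$1$2 = B$1$2 \<and> A$2$1 = B$2$1 \<and> A$2$2 = B$2$2"
  by (auto simp: vec_eq_iff forall_2)

definition ct :: "mat2 \<Rightarrow> mat2" where "ct M = (\<chi> i j. - cnj (M $ j $ i))"

lemma ct_entry[simp]: "ct M $ i $ j = - cnj (M $ j $ i)"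
  by (simp add: ct_def)

lemma linear_ct: "linear ct"
  by (rule linearI) (simp_all add: vec_eq_iff)

lemma bl_ct: "bounded_linear ct"
  using linear_ct linear_conv_bounded_linear by blast

lemma ct_sum: "ct (sum f A) = sum (\<lambda>i. ct (f i)) A"
  using linear_ct by (rule linear_sum)

lemma ct_comm: "ct (comm X Y) = comm (ct X) (ct Y)"
  by (simp add: mat2_eq_iff comm_def algebra_simps)

lemma ct_mult: "ct (X ** Y) = - (ct Y ** ct X)"
  by (simp add: mat2_eq_iff algebra_simps)

lemma ct_add: "ct (X + Y) = ct X + ct Y" and ct_diff: "ct (X - Y) = ct X - ct Y" and ct_neg: "ct (- X) = - ct X" and ct_zero: "ct 0 = 0"
  by (simp_all add: mat2_eq_iff)

lemma ct_mat1: "ct (mat 1) = - mat 1"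
  by (simp add: mat2_eq_iff mat_def)

lemma ct_amat: "ct amat = amat"
  by (simp add: mat2_eq_iff amat_def)

lemma ct_umat: "ct (umat q (\<lambda>z. - cnj (q z)) z) = umat q (\<lambda>z. - cnj (q z)) z"
  by (simp add: mat2_eq_iff umat_def)

lemma ct_P0: "ct (P0mat q (\<lambda>z. - cnj (q z)) z) = P0mat q (\<lambda>z. - cnj (q z)) z"
  by (simp add: mat2_eq_iff P0mat_def)

lemma ct_series:
  assumes S: "typeII_series q (\<lambda>z. - cnj (q z)) Q"
  shows "typeII_series q (\<lambda>z. - cnj (q z)) (\<lambda>k z. ct (Q k z))"
proof -
  let ?r = "\<lambda>z. - cnj (q z)"
  note S' = S[unfolded typeII_series_def]
  have A: "\<forall>k z. k > 2 \<longrightarrow> ct (Q k z) = 0" using S' by (simp add: ct_zero)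
  have B: "\<forall>k z. ct (Q k z) $ 1 $ 1 + ct (Q k z) $ 2 $ 2 = 0"
  proof (intro allI)
    fix k z
    have "Q k z $ 1 $ 1 + Q k z $ 2 $ 2 = 0" using S' by blast
    hence "cnj (Q k z $ 1 $ 1 + Q k z $ 2 $ 2) = 0" by simp
    thus "ct (Q k z) $ 1 $ 1 + ct (Q k z) $ 2 $ 2 = 0" by (simp add: add_eq_0_iff)
  qed
  have C: "\<forall>k z. even k \<longrightarrow> ct (Q k z) $ 1 $ 2 = 0 \<and> ct (Q k z) $ 2 $ 1 = 0"
    using S' by simp
  have D: "\<forall>k z. odd k \<longrightarrow> ct (Q k z) $ 1 $ 1 = 0 \<and> ct (Q k z) $ 2 $ 2 = 0"
    using S' by simp
  have E: "\<forall>z. ct (Q 2 z) = amat" using S' by (simp add: ct_amat)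
  have F: "\<forall>z. ct (Q 1 z) = umat q ?r z" using S' by (simp add: ct_umat)
  have G: "\<forall>k x t. ((\<lambda>s. ct (Q k (s, t))) has_vector_derivative
         - (comm amat (ct (Q (k - 2) (x, t))) + comm (umat q ?r (x, t)) (ct (Q (k - 1) (x, t)))
            + comm (P0mat q ?r (x, t)) (ct (Q k (x, t))))) (at x)"
  proof (intro allI)
    fix k x t
    have "((\<lambda>s. Q k (s, t)) has_vector_derivative
         - (comm amat (Q (k - 2) (x, t)) + comm (umat q ?r (x, t)) (Q (k - 1) (x, t))
            + comm (P0mat q ?r (x, t)) (Q k (x, t)))) (at x)" using S' by blast
    from bounded_linear.has_vector_derivative[OF bl_ct this]
    show "((\<lambda>s. ct (Q k (s, t))) has_vector_derivative
         - (comm amat (ct (Q (k - 2) (x, t))) + comm (umat q ?r (x, t)) (ct (Q (k - 1) (x, t)))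
            + comm (P0mat q ?r (x, t)) (ct (Q k (x, t))))) (at x)"
      by (simp add: ct_add ct_diff ct_neg ct_comm ct_amat ct_umat ct_P0)
  qed
  have H: "\<forall>k z. (\<Sum>i\<in>{k - 2..2}. ct (Q i z) ** ct (Q (k - i) z)) = (if k = 4 then - mat 1 else 0)"
  proof (intro allI)
    fix k z
    have "(\<Sum>i\<in>{k - 2..2}. ct (Q i z) ** ct (Q (k - i) z))
        = (\<Sum>i\<in>{k - 2..2}. - ct (Q (k - i) z ** Q i z))"
      by (simp add: ct_mult)
    also have "\<dots> = - ct (\<Sum>i\<in>{k - 2..2}. Q (k - i) z ** Q i z)"
      by (simp add: ct_sum sum_negf)
    also have "(\<Sum>i\<in>{k - 2..2}. Q (k - i) z ** Q i z) = (\<Sum>i\<in>{k - 2..2}. Q i z ** Q (k - i) z)"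
      by (rule sum.reindex_bij_witness[of _ "\<lambda>i. k - i" "\<lambda>i. k - i"]) auto
    also have "\<dots> = (if k = 4 then - mat 1 else 0)" using S' by blast
    finally show "(\<Sum>i\<in>{k - 2..2}. ct (Q i z) ** ct (Q (k - i) z)) = (if k = 4 then - mat 1 else 0)"
      by (simp add: ct_neg ct_mat1 ct_zero)
  qed
  show ?thesis unfolding typeII_series_def using A B C D E F G H by blast
qed

lemma uniq:
  assumes SQ: "typeII_series q r Q" and SR: "typeII_series q r R"
  shows "Q k z = R k z"
proof -
  note Q' = SQ[unfolded typeII_series_def] and R' = SR[unfolded typeII_series_def]
  note Qz = Q'[THEN conjunct1]
  note Qtr = Q'[THEN conjunct2, THEN conjunct1]
  note Qev = Q'[THEN conjunct2, THEN conjunct2, THEN conjunct1]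
  note Qod = Q'[THEN conjunct2, THEN conjunct2, THEN conjunct2, THEN conjunct1]
  note Q2 = Q'[THEN conjunct2, THEN conjunct2, THEN conjunct2, THEN conjunct2, THEN conjunct1]
  note Q1 = Q'[THEN conjunct2, THEN conjunct2, THEN conjunct2, THEN conjunct2, THEN conjunct2, THEN conjunct1]
  note Qd = Q'[THEN conjunct2, THEN conjunct2, THEN conjunct2, THEN conjunct2, THEN conjunct2, THEN conjunct2, THEN conjunct1]
  note Qs = Q'[THEN conjunct2, THEN conjunct2, THEN conjunct2, THEN conjunct2, THEN conjunct2, THEN conjunct2, THEN conjunct2]
  note Qz' = Qz[rule_format]
  note Qtr' = Qtr[rule_format]
  note Qev' = Qev[rule_format]
  note Qod' = Qod[rule_format]
  note Q2' = Q2[rule_format]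
  note Q1' = Q1[rule_format]
  note Qs' = Qs[rule_format]
  note Rz = R'[THEN conjunct1]
  note Rtr = R'[THEN conjunct2, THEN conjunct1]
  note Rev = R'[THEN conjunct2, THEN conjunct2, THEN conjunct1]
  note Rod = R'[THEN conjunct2, THEN conjunct2, THEN conjunct2, THEN conjunct1]
  note R2 = R'[THEN conjunct2, THEN conjunct2, THEN conjunct2, THEN conjunct2, THEN conjunct1]
  note R1 = R'[THEN conjunct2, THEN conjunct2, THEN conjunct2, THEN conjunct2, THEN conjunct2, THEN conjunct1]
  note Rd = R'[THEN conjunct2, THEN conjunct2, THEN conjunct2, THEN conjunct2, THEN conjunct2, THEN conjunct2, THEN conjunct1]
  note Rs = R'[THEN conjunct2, THEN conjunct2, THEN conjunct2, THEN conjunct2, THEN conjunct2, THEN conjunct2, THEN conjunct2]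
  note Rz' = Rz[rule_format]
  note Rtr' = Rtr[rule_format]
  note Rev' = Rev[rule_format]
  note Rod' = Rod[rule_format]
  note R2' = R2[rule_format]
  note R1' = R1[rule_format]
  note Rs' = Rs[rule_format]
  have main: "\<forall>z. Q (2 - int n) z = R (2 - int n) z" for n
  proof (induction n rule: less_induct)
    case (less n)
    define k where "k = 2 - int n"
    have IH: "Q i = R i" if "i > k" for i
    proof (rule ext)
      fix z
      show "Q i z = R i z"
      proof (cases "i > 2")
        case True
        have "Q i z = 0" "R i z = 0" using Qz' Rz' True by blast+
        thus ?thesis by simp
      next
        case False
        hence "i = 2 - int (nat (2 - i))" "nat (2 - i) < n" using that k_def by auto
        thus ?thesis using less by metis
      qed
    qed
    show ?case
    proof (cases "n = 0")
      case True
      have "Q 2 z = amat" "R 2 z = amat" for z using Q2' R2' by blast+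
      thus ?thesis using True by simp
    next
      case n0: False
      show ?thesis
      proof (cases "n = 1")
        case True
        have "Q 1 z = umat q r z" "R 1 z = umat q r z" for z using Q1' R1' by blast+
        thus ?thesis using True by simp
      next
        case n1: False
        hence kle: "k \<le> 0" using n0 k_def by simp
        show ?thesis unfolding k_def[symmetric]
        proof
          fix z
          show "Q k z = R k z"
          proof (cases "odd k")
            case True
            obtain x t where z: "z = (x, t)" by (cases z)
            have dQ: "((\<lambda>s. Q (k+2) (s, t)) has_vector_derivative
               - (comm amat (Q k (x, t)) + comm (umat q r (x, t)) (Q (k + 1) (x, t))
                 + comm (P0mat q r (x, t)) (Q (k+2) (x, t)))) (at x)"
            proof -
              have kk: "k + 2 - 2 = k" "k + 2 - 1 = k + 1" by simp_all
              have "((\<lambda>s. Q (k+2) (s, t)) has_vector_derivative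
               - (comm amat (Q (k + 2 - 2) (x, t)) + comm (umat q r (x, t)) (Q (k + 2 - 1) (x, t))
                 + comm (P0mat q r (x, t)) (Q (k+2) (x, t)))) (at x)" using Qd by blast
              thus ?thesis unfolding kk .
            qed
            have dR: "((\<lambda>s. R (k+2) (s, t)) has_vector_derivative
               - (comm amat (R k (x, t)) + comm (umat q r (x, t)) (R (k + 1) (x, t))
                 + comm (P0mat q r (x, t)) (R (k+2) (x, t)))) (at x)"
            proof -
              have kk: "k + 2 - 2 = k" "k + 2 - 1 = k + 1" by simp_all
              have "((\<lambda>s. R (k+2) (s, t)) has_vector_derivative
               - (comm amat (R (k + 2 - 2) (x, t)) + comm (umat q r (x, t)) (R (k + 2 - 1) (x, t))
                 + comm (P0mat q r (x, t)) (R (k+2) (x, t)))) (at x)" using Rd by blast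
              thus ?thesis unfolding kk .
            qed
            have e1: "Q (k+2) = R (k+2)" "Q (k+1) = R (k+1)" using IH by auto
            have "comm amat (Q k (x, t)) = comm amat (R k (x, t))"
              using vector_derivative_unique_at[OF dQ dR[folded e1]] by simp
            hence "Q k z $ 1 $ 2 = R k z $ 1 $ 2 \<and> Q k z $ 2 $ 1 = R k z $ 2 $ 1"
              by (simp add: z mat2_eq_iff comm_def amat_def)
            moreover have "Q k z $ 1 $ 1 = 0 \<and> Q k z $ 2 $ 2 = 0 \<and> R k z $ 1 $ 1 = 0 \<and> R k z $ 2 $ 2 = 0"
              using Qod'[OF True] Rod'[OF True] by blast
            ultimately show ?thesis by (simp add: mat2_eq_iff)
          next
            case False
            have setq: "{k + 2 - 2..2} = insert k (insert 2 {k+1..1})" using kle by auto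
            have nk: "k \<notin> insert 2 {k+1..1}" "2 \<notin> {k+1..(1::int)}" using kle by auto
            have midQ: "(\<Sum>i\<in>{k+1..1}. Q i z ** Q (k + 2 - i) z) = (\<Sum>i\<in>{k+1..1}. R i z ** R (k + 2 - i) z)"
            proof (rule sum.cong)
              fix i assume "i \<in> {k+1..1}"
              hence "i > k" "k + 2 - i > k" by auto
              thus "Q i z ** Q (k + 2 - i) z = R i z ** R (k + 2 - i) z" using IH by simp
            qed simp
            have sQ: "(\<Sum>i\<in>{k + 2 - 2..2}. Q i z ** Q (k + 2 - i) z) = (\<Sum>i\<in>{k + 2 - 2..2}. R i z ** R (k + 2 - i) z)"
            proof -
              have "(\<Sum>i\<in>{k + 2 - 2..2}. Q i z ** Q (k + 2 - i) z) = (if k + 2 = 4 then - mat 1 else 0)"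
                using Qs' by blast
              moreover have "(\<Sum>i\<in>{k + 2 - 2..2}. R i z ** R (k + 2 - i) z) = (if k + 2 = 4 then - mat 1 else 0)"
                using Rs' by blast
              ultimately show ?thesis by simp
            qed
            hence "Q k z ** Q 2 z + (Q 2 z ** Q k z + (\<Sum>i\<in>{k+1..1}. Q i z ** Q (k + 2 - i) z))
                 = R k z ** R 2 z + (R 2 z ** R k z + (\<Sum>i\<in>{k+1..1}. R i z ** R (k + 2 - i) z))"
              unfolding setq using nk by (simp add: sum.insert)
            hence "Q k z ** amat + amat ** Q k z = R k z ** amat + amat ** R k z"
              using midQ Q2' R2' by simp
            hence "Q k z $ 1 $ 1 = R k z $ 1 $ 1"
              using Qev'[of k z] Rev'[of k z] False by (simp add: mat2_eq_iff amat_def)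
            moreover have "Q k z $ 1 $ 2 = 0 \<and> Q k z $ 2 $ 1 = 0 \<and> R k z $ 1 $ 2 = 0 \<and> R k z $ 2 $ 1 = 0"
              using Qev'[of k z] Rev'[of k z] False by blast
            moreover have "Q k z $ 1 $ 1 + Q k z $ 2 $ 2 = 0" "R k z $ 1 $ 1 + R k z $ 2 $ 2 = 0"
              using Qtr' Rtr' by blast+
            ultimately show ?thesis by (simp add: mat2_eq_iff add_eq_0_iff)
          qed
        qed
      qed
    qed
  qed
  show ?thesis
  proof (cases "k > 2")
    case True
    have "Q k z = 0" "R k z = 0" using Qz' Rz' True by blast+
    thus ?thesis by simp
  next
    case False
    hence "k = 2 - int (nat (2 - k))" by simp
    thus ?thesis using main by metis
  qed
qed

theorem mainTheorem1:
  fixes q :: "real \<times> real \<Rightarrow> complex" and j :: nat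
    and Q :: "int \<Rightarrow> real \<times> real \<Rightarrow> complex^2^2"
  assumes "j \<ge> 1"
    and "smooth2 q"
    and "typeII_series q (\<lambda>z. - cnj (q z)) Q"
  shows "\<forall>z. flowG q (\<lambda>z. - cnj (q z)) Q j z = - cnj (flowF q (\<lambda>z. - cnj (q z)) Q j z)"
proof
  fix z :: "real \<times> real"
  let ?r = "\<lambda>z. - cnj (q z)"
  let ?m = "3 - 2 * int j"
  note S = assms(3)
  note S' = S[unfolded typeII_series_def]
  have sym: "Q k z = ct (Q k z)" for k
    using uniq[OF S ct_series[OF S]] .
  obtain x t where z: "z = (x, t)" by (cases z)
  have d: "((\<lambda>s. Q ?m (s, t)) has_vector_derivative
         - (comm amat (Q (?m - 2) (x, t)) + comm (umat q ?r (x, t)) (Q (?m - 1) (x, t))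
            + comm (P0mat q ?r (x, t)) (Q ?m (x, t)))) (at x)" using S' by blast
  have dx: "dx (Q ?m) z = - (comm amat (Q (?m - 2) z) + comm (umat q ?r z) (Q (?m - 1) z)
            + comm (P0mat q ?r z) (Q ?m z))"
    unfolding dx_def z using vector_derivative_at[OF d] by simp
  have e: "?m - 2 = 1 - 2 * int j" "?m - 1 = 2 - 2 * int j" by simp_all
  have fr: "flowRHS q ?r Q j z = - comm amat (Q (1 - 2 * int j) z)"
    unfolding flowRHS_def dx e by (simp add: algebra_simps)
  define M where "M = Q (1 - 2 * int j) z"
  have "M $ 2 $ 1 = - cnj (M $ 1 $ 2)" using sym[of "1 - 2 * int j"] unfolding M_def
    by (metis ct_entry)
  thus "flowG q ?r Q j z = - cnj (flowF q ?r Q j z)"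
    unfolding flowG_def flowF_def fr M_def[symmetric]
    by (simp add: comm_def amat_def algebra_simps)
qed

end
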